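(* Let $U\in C^\infty(\mathbb{R}^{2d})$ be real and satisfy Hypothesis (U), with associated symplectomorphism $\Phi$. An operator $W\in\mathbb{B}(\mathcal S(\mathbb{R}^d);\mathcal S'(\mathbb{R}^d))$ is of the form $\mathfrak{Op}^A_\Phi(a)$ with $a\in S^{-\infty}(\mathbb{R}^d)$ if and only if there exists $b\in S^{-\infty}(\mathbb{R}^d)$ with $W=b^A(x,D)$.
   Context: Notation: $\langle\xi\rangle=(1+|\xi|^2)^{1/2}$, $\bar d\eta=(2\pi)^{-d}d\eta$. $S^m(\mathbb{R}^d)$: $a\in C^\infty(\mathbb{R}^{2d})$ with $|\partial_x^\alpha\partial_\xi^\beta a|\le C_{\alpha\beta}\langle\xi\rangle^{m-|\beta|}$; $S^{-\infty}=\bigcap_mS^m$. $S^+$: smooth $f$ with $\partial_{x_j}f\in S^1$, $\partial_{\xi_j}f\in S^0$. Hypothesis (U): $U(x,\eta)=\langle x,\eta\rangle+d(x,\eta)$, $d\in S^+$ real, $\|(\partial_{x_j}\partial_{\eta_k}d)\|\le\delta<1$ everywhere; $\Phi(\nabla_\eta U(x,\eta),\eta)=(x,\nabla_xU(x,\eta))$. Magnetic field $B=\frac12\sum B_{jk}dx_j\wedge dx_k$ closed, real $B_{jk}=-B_{kj}\in BC^\infty$; $A$ real 1-form with smooth polynomially bounded coefficients, $dA=B$; $\omega^A(x,y)=\exp\{-i\int_{[x,y]}A\}$ (line integral along the segment $x\to y$). $[b^A(x,D)u](x)=\iint e^{i\langle x-y,\eta\rangle}\omega^A(x,y)b(x,\eta)u(y)dy\,\bar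 d\eta$; $[\mathfrak{Op}^A_\Phi(a)u](x)=\iint e^{i(U(x,\eta)-\langle y,\eta\rangle)}\omega^A(x,y)a(x,\eta)u(y)dy\,\bar d\eta$. *)

theory Defs
  imports "HOL-Analysis.Analysis"
begin

type_synonym ('n) phase_pt = "(real^'n) \<times> (real^'n)"

text \<open>Iterated directional (Frechet) derivatives. The head of the list is applied last.\<close>
primrec pderivs :: "('a::real_normed_vector \<Rightarrow> 'b::real_normed_vector) \<Rightarrow> 'a list \<Rightarrow> 'a \<Rightarrow> 'b" where
  "pderivs f [] = f"
| "pderivs f (v # vs) = (\<lambda>p. frechet_derivative (pderivs f vs) (at p) v)"

definition smooth :: "('a::real_normed_vector \<Rightarrow> 'b::real_normed_vector) \<Rightarrow> bool" where
  "smooth f \<longleftrightarrow> (\<forall>vs p. pderivs f vs differentiable (at p))"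

definition jbr :: "real^'n \<Rightarrow> real" where
  "jbr \<xi> = sqrt (1 + (norm \<xi>)\<^sup>2)"

definition xdirs :: "('n::finite) phase_pt set" where
  "xdirs = {(axis i 1, 0) | i. True}"

definition xidirs :: "('n::finite) phase_pt set" where
  "xidirs = {(0, axis j 1) | j. True}"

text \<open>Hoermander symbol class S^m (on R^d x R^d, d = CARD('n)).
  A list vs of coordinate directions encodes a multi-index (alpha, beta);
  |beta| is the number of xi-directions in vs.\<close>
definition symb :: "real \<Rightarrow> (('n::finite) phase_pt \<Rightarrow> 'b::real_normed_vector) set" where
  "symb m = {a. smooth a \<and>
     (\<forall>vs. set vs \<subseteq> xdirs \<union> xidirs \<longrightarrow>
        (\<exists>C. \<forall>x \<xi>. norm (pderivs a vs (x, \<xi>))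
               \<le> C * jbr \<xi> powr (m - real (length (filter (\<lambda>v. v \<in> xidirs) vs)))))}"

definition symb_minus_inf :: "(('n::finite) phase_pt \<Rightarrow> 'b::real_normed_vector) set" where
  "symb_minus_inf = (\<Inter>m. symb m)"

definition symb_plus :: "(('n::finite) phase_pt \<Rightarrow> 'b::real_normed_vector) set" where
  "symb_plus = {f. smooth f \<and>
     (\<forall>j. pderivs f [(axis j 1, 0)] \<in> symb 1 \<and> pderivs f [(0, axis j 1)] \<in> symb 0)}"

text \<open>Hypothesis (U): U(x,eta) = <x,eta> + d(x,eta), d in S^+ real, and the matrix
  (d_{x_j} d_{eta_k} d) has operator norm at most delta < 1 everywhere
  (expressed as the bound on the associated bilinear form).\<close>
definition hyp_U :: "(('n::finite) phase_pt \<Rightarrow> real) \<Rightarrow> bool" where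
  "hyp_U U \<longleftrightarrow> (\<exists>d \<delta>. d \<in> symb_plus \<and> \<delta> < 1 \<and>
      (\<forall>x \<eta>. U (x, \<eta>) = x \<bullet> \<eta> + d (x, \<eta>)) \<and>
      (\<forall>x \<eta> v w. \<bar>pderivs d [(v, 0), (0, w)] (x, \<eta>)\<bar> \<le> \<delta> * norm v * norm w))"

text \<open>Magnetic potential A (components A_j, a real 1-form) with smooth polynomially
  bounded coefficients, whose differential B = dA, B_jk = d_j A_k - d_k A_j,
  has coefficients in BC-infinity (closedness of B is automatic).\<close>
definition mag_field :: "(real^'n \<Rightarrow> real^'n) \<Rightarrow> 'n \<Rightarrow> 'n \<Rightarrow> real^'n \<Rightarrow> real" where
  "mag_field A j k x =
     frechet_derivative (\<lambda>y. A y $ k) (at x) (axis j 1)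
   - frechet_derivative (\<lambda>y. A y $ j) (at x) (axis k 1)"

definition magnetic_potential :: "(real^'n \<Rightarrow> real^'n) \<Rightarrow> bool" where
  "magnetic_potential A \<longleftrightarrow>
     (\<forall>j. smooth (\<lambda>x. A x $ j)) \<and>
     (\<exists>C N. \<forall>x. norm (A x) \<le> C * (1 + norm x) ^ N) \<and>
     (\<forall>j k. smooth (mag_field A j k) \<and>
        (\<forall>vs. \<exists>C. \<forall>x. \<bar>pderivs (mag_field A j k) vs x\<bar> \<le> C))"

definition schwartz :: "(real^'n \<Rightarrow> complex) \<Rightarrow> bool" where
  "schwartz u \<longleftrightarrow> smooth u \<and>
     (\<forall>vs (N::nat). \<exists>C. \<forall>x. (1 + norm x) ^ N * norm (pderivs u vs x) \<le> C)"

text \<open>omega^A(x,y) = exp(-i int_{[x,y]} A), segment parametrised by x + t(y - x).\<close>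
definition omegaA :: "(real^'n \<Rightarrow> real^'n) \<Rightarrow> real^'n \<Rightarrow> real^'n \<Rightarrow> complex" where
  "omegaA A x y = cis (- integral {0..1} (\<lambda>t. A (x + t *\<^sub>R (y - x)) \<bullet> (y - x)))"

definition dbar :: "'n::finite itself \<Rightarrow> complex" where
  "dbar (_::'n itself) = complex_of_real ((2 * pi) powr (- real CARD('n)))"

text \<open>Magnetic quantization b^A(x,D) (iterated integral: dy inside, d-bar eta outside).\<close>
definition OpA :: "(real^'n \<Rightarrow> real^'n) \<Rightarrow> (('n::finite) phase_pt \<Rightarrow> complex)
                   \<Rightarrow> (real^'n \<Rightarrow> complex) \<Rightarrow> real^'n \<Rightarrow> complex" where
  "OpA A b u x = dbar TYPE('n) * integral UNIV (\<lambda>\<eta>. integral UNIV (\<lambda>y.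
      cis ((x - y) \<bullet> \<eta>) * omegaA A x y * b (x, \<eta>) * u y))"

definition OpPhiA :: "(('n::finite) phase_pt \<Rightarrow> real) \<Rightarrow> (real^'n \<Rightarrow> real^'n) \<Rightarrow> (('n::finite) phase_pt \<Rightarrow> complex)
                   \<Rightarrow> (real^'n \<Rightarrow> complex) \<Rightarrow> real^'n \<Rightarrow> complex" where
  "OpPhiA U A a u x = dbar TYPE('n) * integral UNIV (\<lambda>\<eta>. integral UNIV (\<lambda>y.
      cis (U (x, \<eta>) - y \<bullet> \<eta>) * omegaA A x y * a (x, \<eta>) * u y))"

end

theory Submission
  imports Defs
begin


definition Dv :: "('a::real_normed_vector \<Rightarrow> complex) \<Rightarrow> 'a \<Rightarrow> 'a \<Rightarrow> complex" where
  "Dv f v = (\<lambda>q. frechet_derivative f (at q) v)"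

primrec sp :: "(('a \<Rightarrow> complex) \<times> ('a \<Rightarrow> complex)) list \<Rightarrow> 'a \<Rightarrow> complex" where
  "sp [] = (\<lambda>p. 0)"
| "sp (fg # xs) = (\<lambda>p. fst fg p * snd fg p + sp xs p)"

primrec dl :: "(('a::real_normed_vector \<Rightarrow> complex) \<times> ('a \<Rightarrow> complex)) list \<Rightarrow> 'a \<Rightarrow> (('a \<Rightarrow> complex) \<times> ('a \<Rightarrow> complex)) list" where
  "dl [] v = []"
| "dl (fg # xs) v = (Dv (fst fg) v, snd fg) # (fst fg, Dv (snd fg) v) # dl xs v"

lemma pderivs_Cons_Dv: "pderivs f (v # vs) = Dv (pderivs f vs) v"
  by (simp add: Dv_def)

lemma pderivs_append: "pderivs (pderivs f us) vs = pderivs f (vs @ us)"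
  by (induction vs) auto

lemma closure_pderivs:
  assumes "h \<in> M" "\<And>h v. h \<in> M \<Longrightarrow> v \<in> S \<Longrightarrow> Dv h v \<in> M" "set vs \<subseteq> S"
  shows "pderivs h vs \<in> M"
  using assms(3)
proof (induction vs)
  case Nil then show ?case using assms(1) by simp
next
  case (Cons a vs)
  have "pderivs h (a # vs) = Dv (pderivs h vs) a" by (rule pderivs_Cons_Dv)
  then show ?case using Cons assms(2) by simp
qed

lemma smooth_diff: "smooth f \<Longrightarrow> f differentiable (at p)"
  unfolding smooth_def by (metis pderivs.simps(1))

lemma smooth_Dv: "smooth f \<Longrightarrow> smooth (Dv f v)"
proof -
  assume "smooth f"
  have "Dv f v = pderivs f [v]" by (simp add: Dv_def)
  then have "pderivs (Dv f v) vs = pderivs f (vs @ [v])" for vs by (simp only: pderivs_append)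
  then show ?thesis using \<open>smooth f\<close> unfolding smooth_def by simp
qed

lemma sp_has_derivative:
  assumes "\<forall>fg\<in>set xs. \<forall>q. fst fg differentiable (at q) \<and> snd fg differentiable (at q)"
  shows "(sp xs has_derivative (\<lambda>v. sp (dl xs v) p)) (at p)"
  using assms
proof (induction xs)
  case Nil
  then show ?case by (simp add: has_derivative_const)
next
  case (Cons fg xs)
  obtain f g where fg: "fg = (f, g)" by (cases fg)
  have df: "(f has_derivative frechet_derivative f (at p)) (at p)"
    and dg: "(g has_derivative frechet_derivative g (at p)) (at p)"
    using Cons.prems fg by (auto simp: frechet_derivative_works[symmetric])
  have IH: "(sp xs has_derivative (\<lambda>v. sp (dl xs v) p)) (at p)" using Cons by auto
  have "((\<lambda>q. f q * g q + sp xs q) has_derivative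
      (\<lambda>v. (f p * frechet_derivative g (at p) v + frechet_derivative f (at p) v * g p) + sp (dl xs v) p)) (at p)"
    by (intro has_derivative_add has_derivative_mult df dg IH)
  moreover have "sp (fg # xs) = (\<lambda>q. f q * g q + sp xs q)" by (simp add: fg)
  ultimately show ?case
    by (auto simp: fg Dv_def algebra_simps elim!: has_derivative_eq_rhs)
qed

lemma sp_Dv:
  assumes "\<forall>fg\<in>set xs. \<forall>q. fst fg differentiable (at q) \<and> snd fg differentiable (at q)"
  shows "Dv (sp xs) v = sp (dl xs v)"
  unfolding Dv_def using frechet_derivative_at[OF sp_has_derivative[OF assms]]
  by (auto simp: fun_eq_iff)

lemma sp_differentiable:
  assumes "\<forall>fg\<in>set xs. \<forall>q. fst fg differentiable (at q) \<and> snd fg differentiable (at q)"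
  shows "sp xs differentiable (at p)"
  using sp_has_derivative[OF assms] differentiable_def by blast

lemma dl_set: "fg \<in> set (dl xs v) \<Longrightarrow> \<exists>f g. (f, g) \<in> set xs \<and> (fg = (Dv f v, g) \<or> fg = (f, Dv g v))"
proof (induction xs)
  case Nil then show ?case by simp
next
  case (Cons ab xs)
  obtain a b where ab: "ab = (a, b)" by (cases ab)
  from Cons.prems have "fg = (Dv a v, b) \<or> fg = (a, Dv b v) \<or> fg \<in> set (dl xs v)" by (simp add: ab)
  then show ?case
  proof (elim disjE)
    assume "fg = (Dv a v, b)" then show ?thesis by (intro exI[of _ a] exI[of _ b]) (simp add: ab)
  next
    assume "fg = (a, Dv b v)" then show ?thesis by (intro exI[of _ a] exI[of _ b]) (simp add: ab)
  next
    assume "fg \<in> set (dl xs v)" then show ?thesis using Cons.IH by auto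
  qed
qed

definition Msm :: "('a::real_normed_vector \<Rightarrow> complex) set" where
  "Msm = {sp xs | xs. \<forall>fg\<in>set xs. smooth (fst fg) \<and> smooth (snd fg)}"

lemma Msm_smooth: "h \<in> Msm \<Longrightarrow> smooth h"
proof -
  assume h: "h \<in> Msm"
  have cl: "Dv h v \<in> Msm" if "h \<in> Msm" for h v
  proof -
    from that obtain xs where xs: "h = sp xs" "\<forall>fg\<in>set xs. smooth (fst fg) \<and> smooth (snd fg)"
      unfolding Msm_def by blast
    have "Dv h v = sp (dl xs v)" using xs by (simp add: sp_Dv smooth_diff)
    moreover have "\<forall>fg\<in>set (dl xs v). smooth (fst fg) \<and> smooth (snd fg)"
      using xs(2) dl_set[of _ xs v] smooth_Dv by fastforce
    ultimately show ?thesis unfolding Msm_def by blast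
  qed
  show "smooth h" unfolding smooth_def
  proof (intro allI)
    fix vs p
    have "pderivs h vs \<in> Msm" by (rule closure_pderivs[OF h cl]) auto
    then show "pderivs h vs differentiable (at p)"
      unfolding Msm_def using sp_differentiable smooth_diff by fastforce
  qed
qed

lemma smooth_mult: fixes f g :: "'a::real_normed_vector \<Rightarrow> complex" shows "smooth f \<Longrightarrow> smooth g \<Longrightarrow> smooth (\<lambda>p. f p * g p)"
proof -
  assume "smooth f" "smooth g"
  then have "sp [(f, g)] \<in> Msm" unfolding Msm_def by (intro CollectI exI[of _ "[(f,g)]"]) simp
  moreover have "sp [(f,g)] = (\<lambda>p. f p * g p)" by auto
  ultimately show ?thesis using Msm_smooth by metis
qed



definition Dc :: "('n::finite) phase_pt set" where "Dc = xdirs \<union> xidirs"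

definition Kc :: "(('n::finite) phase_pt \<Rightarrow> complex) set" where
  "Kc = {f. smooth f \<and> (\<forall>vs. set vs \<subseteq> Dc \<longrightarrow>
      (\<exists>C N. \<forall>x \<xi>. norm (pderivs f vs (x,\<xi>)) \<le> C * jbr \<xi> powr N))}"

definition Sc :: "(('n::finite) phase_pt \<Rightarrow> complex) set" where
  "Sc = {f. smooth f \<and> (\<forall>vs. set vs \<subseteq> Dc \<longrightarrow>
      (\<forall>m. \<exists>C. \<forall>x \<xi>. norm (pderivs f vs (x,\<xi>)) \<le> C * jbr \<xi> powr m))}"

lemma jbr_ge1: "jbr \<xi> \<ge> 1" unfolding jbr_def by simp

lemma jbr_pos: "jbr \<xi> > 0" using jbr_ge1[of \<xi>] by linarith

lemma jbrp_pos: "0 < jbr \<xi> powr a" using jbr_pos[of \<xi>] by simp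

lemma normbound: "norm y \<le> C * w \<Longrightarrow> 0 < (w::real) \<Longrightarrow> norm y \<le> \<bar>C\<bar> * w"
  by (smt (verit) mult_right_mono abs_ge_self)

lemma Dv_pderivs: "pderivs (Dv f v) vs = pderivs f (vs @ [v])"
proof -
  have "Dv f v = pderivs f [v]" by (simp add: Dv_def)
  then show ?thesis by (simp only: pderivs_append)
qed

lemma Kc_Dv: "f \<in> Kc \<Longrightarrow> v \<in> Dc \<Longrightarrow> Dv f v \<in> Kc"
  unfolding Kc_def by (auto simp: Dv_pderivs smooth_Dv)

lemma Sc_Dv: "f \<in> Sc \<Longrightarrow> v \<in> Dc \<Longrightarrow> Dv f v \<in> Sc"
  unfolding Sc_def by (auto simp: Dv_pderivs smooth_Dv)

lemma Kc_bnd: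
  assumes "f \<in> Kc" "set vs \<subseteq> Dc"
  shows "\<exists>C N. C \<ge> 0 \<and> (\<forall>x \<xi>. norm (pderivs f vs (x,\<xi>)) \<le> C * jbr \<xi> powr N)"
proof -
  obtain C N where "\<forall>x \<xi>. norm (pderivs f vs (x,\<xi>)) \<le> C * jbr \<xi> powr N"
    using assms unfolding Kc_def by blast
  then have "\<forall>x \<xi>. norm (pderivs f vs (x,\<xi>)) \<le> \<bar>C\<bar> * jbr \<xi> powr N"
    using normbound jbrp_pos by blast
  then show ?thesis using abs_ge_zero by blast
qed

lemma Sc_bnd:
  assumes "f \<in> Sc" "set vs \<subseteq> Dc"
  shows "\<exists>C. C \<ge> 0 \<and> (\<forall>x \<xi>. norm (pderivs f vs (x,\<xi>)) \<le> C * jbr \<xi> powr m)"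
proof -
  obtain C where "\<forall>x \<xi>. norm (pderivs f vs (x,\<xi>)) \<le> C * jbr \<xi> powr m"
    using assms unfolding Sc_def by blast
  then have "\<forall>x \<xi>. norm (pderivs f vs (x,\<xi>)) \<le> \<bar>C\<bar> * jbr \<xi> powr m"
    using normbound jbrp_pos by blast
  then show ?thesis using abs_ge_zero by blast
qed

lemma Kc_smooth: "f \<in> Kc \<Longrightarrow> smooth f" unfolding Kc_def by simp
lemma Sc_smooth: "f \<in> Sc \<Longrightarrow> smooth f" unfolding Sc_def by simp

lemma powr_le_max: "C \<ge> 0 \<Longrightarrow> C * jbr \<xi> powr a \<le> C * jbr \<xi> powr (max a b)"
  by (intro mult_left_mono powr_mono jbr_ge1) auto

lemma powr_le_max2: "C \<ge> 0 \<Longrightarrow> C * jbr \<xi> powr b \<le> C * jbr \<xi> powr (max a b)"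
  by (intro mult_left_mono powr_mono jbr_ge1) auto

lemma prod_bound:
  fixes a b :: complex
  assumes "norm a \<le> C1 * w1" "norm b \<le> C2 * w2" "C1 \<ge> 0" "C2 \<ge> 0"
  shows "norm (a * b) \<le> (C1 * C2) * (w1 * w2)"
proof -
  have "norm (a * b) = norm a * norm b" by (simp add: norm_mult)
  also have "\<dots> \<le> (C1 * w1) * (C2 * w2)"
    using assms by (intro mult_mono) (auto intro: order_trans[OF norm_ge_zero])
  finally show ?thesis by (simp add: algebra_simps)
qed

lemma sp_bound_K:
  fixes ys :: "(('n::finite phase_pt \<Rightarrow> complex) \<times> ('n phase_pt \<Rightarrow> complex)) list"
  shows "\<forall>fg\<in>set ys. fst fg \<in> Kc \<and> snd fg \<in> Kc \<Longrightarrow>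
    \<exists>C N. C \<ge> 0 \<and> (\<forall>x \<xi>. norm (sp ys (x,\<xi>)) \<le> C * jbr \<xi> powr N)"
proof (induction ys)
  case Nil then show ?case by (intro exI[of _ 0]) auto
next
  case (Cons fg ys)
  obtain f g where fg: "fg = (f, g)" by (cases fg)
  have f: "f \<in> Kc" and g: "g \<in> Kc" using Cons.prems fg by auto
  obtain C1 N1 where c1: "C1 \<ge> 0" "\<forall>x \<xi>. norm (f (x,\<xi>)) \<le> C1 * jbr \<xi> powr N1"
    using Kc_bnd[OF f, of "[]"] by auto
  obtain C2 N2 where c2: "C2 \<ge> 0" "\<forall>x \<xi>. norm (g (x,\<xi>)) \<le> C2 * jbr \<xi> powr N2"
    using Kc_bnd[OF g, of "[]"] by auto
  obtain C3 N3 where c3: "C3 \<ge> 0" "\<forall>x \<xi>. norm (sp ys (x,\<xi>)) \<le> C3 * jbr \<xi> powr N3"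
    using Cons by auto
  show ?case
  proof (rule exI[of _ "C1 * C2 + C3"], rule exI[of _ "max (N1 + N2) N3"], intro conjI allI)
    show "0 \<le> C1 * C2 + C3" using c1 c2 c3 by simp
    fix x \<xi>
    have "norm (f (x,\<xi>) * g (x,\<xi>)) \<le> (C1 * C2) * (jbr \<xi> powr N1 * jbr \<xi> powr N2)"
      using c1 c2 by (intro prod_bound) auto
    also have "\<dots> = (C1 * C2) * jbr \<xi> powr (N1 + N2)" by (simp add: powr_add)
    also have "\<dots> \<le> (C1 * C2) * jbr \<xi> powr (max (N1 + N2) N3)" using c1 c2 by (intro powr_le_max) simp
    finally have A: "norm (f (x,\<xi>) * g (x,\<xi>)) \<le> (C1 * C2) * jbr \<xi> powr (max (N1 + N2) N3)" .
    have B: "norm (sp ys (x,\<xi>)) \<le> C3 * jbr \<xi> powr (max (N1 + N2) N3)"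
      using c3 powr_le_max2[of C3 \<xi> N3 "N1 + N2"] by (smt (verit))
    have "norm (sp (fg # ys) (x,\<xi>)) \<le> norm (f (x,\<xi>) * g (x,\<xi>)) + norm (sp ys (x,\<xi>))"
      by (simp add: fg norm_triangle_ineq)
    also have "\<dots> \<le> (C1 * C2 + C3) * jbr \<xi> powr (max (N1 + N2) N3)"
      using A B by (simp add: algebra_simps)
    finally show "norm (sp (fg # ys) (x,\<xi>)) \<le> (C1 * C2 + C3) * jbr \<xi> powr (max (N1 + N2) N3)" .
  qed
qed

lemma sp_bound_S:
  fixes ys :: "(('n::finite phase_pt \<Rightarrow> complex) \<times> ('n phase_pt \<Rightarrow> complex)) list"
  shows "\<forall>fg\<in>set ys. fst fg \<in> Kc \<and> snd fg \<in> Sc \<Longrightarrow>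
    \<exists>C. C \<ge> 0 \<and> (\<forall>x \<xi>. norm (sp ys (x,\<xi>)) \<le> C * jbr \<xi> powr m)"
proof (induction ys)
  case Nil then show ?case by (intro exI[of _ 0]) auto
next
  case (Cons fg ys)
  obtain f g where fg: "fg = (f, g)" by (cases fg)
  have f: "f \<in> Kc" and g: "g \<in> Sc" using Cons.prems fg by auto
  obtain C1 N1 where c1: "C1 \<ge> 0" "\<forall>x \<xi>. norm (f (x,\<xi>)) \<le> C1 * jbr \<xi> powr N1"
    using Kc_bnd[OF f, of "[]"] by auto
  obtain C2 where c2: "C2 \<ge> 0" "\<forall>x \<xi>. norm (g (x,\<xi>)) \<le> C2 * jbr \<xi> powr (m - N1)"
    using Sc_bnd[OF g, of "[]" "m - N1"] by auto
  obtain C3 where c3: "C3 \<ge> 0" "\<forall>x \<xi>. norm (sp ys (x,\<xi>)) \<le> C3 * jbr \<xi> powr m"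
    using Cons by auto
  show ?case
  proof (intro exI[of _ "C1 * C2 + C3"] conjI allI)
    show "0 \<le> C1 * C2 + C3" using c1 c2 c3 by simp
    fix x \<xi>
    have "norm (f (x,\<xi>) * g (x,\<xi>)) \<le> (C1 * C2) * (jbr \<xi> powr N1 * jbr \<xi> powr (m - N1))"
      using c1 c2 by (intro prod_bound) auto
    also have "\<dots> = (C1 * C2) * jbr \<xi> powr m" by (simp add: powr_add[symmetric])
    finally have A: "norm (f (x,\<xi>) * g (x,\<xi>)) \<le> (C1 * C2) * jbr \<xi> powr m" .
    have "norm (sp (fg # ys) (x,\<xi>)) \<le> norm (f (x,\<xi>) * g (x,\<xi>)) + norm (sp ys (x,\<xi>))"
      by (simp add: fg norm_triangle_ineq)
    also have "\<dots> \<le> (C1 * C2 + C3) * jbr \<xi> powr m"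
      using A c3 by (simp add: algebra_simps add_mono)
    finally show "norm (sp (fg # ys) (x,\<xi>)) \<le> (C1 * C2 + C3) * jbr \<xi> powr m" .
  qed
qed

lemma sp_Msm: "\<forall>fg\<in>set xs. smooth (fst fg) \<and> smooth (snd fg) \<Longrightarrow> sp xs \<in> Msm"
  unfolding Msm_def by blast

lemma dl_pred:
  assumes "\<forall>fg\<in>set xs. P (fst fg) \<and> Q (snd fg)"
    "\<And>f. P f \<Longrightarrow> P (Dv f v)" "\<And>f. Q f \<Longrightarrow> Q (Dv f v)"
  shows "\<forall>fg\<in>set (dl xs v). P (fst fg) \<and> Q (snd fg)"
  using assms dl_set[of _ xs v] by fastforce

lemma sp_in_Kc:
  fixes xs :: "(('n::finite phase_pt \<Rightarrow> complex) \<times> ('n phase_pt \<Rightarrow> complex)) list"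
  assumes xs: "\<forall>fg\<in>set xs. fst fg \<in> Kc \<and> snd fg \<in> Kc"
  shows "sp xs \<in> Kc"
proof -
  define M :: "('n phase_pt \<Rightarrow> complex) set" where "M = {sp ys | ys. \<forall>fg\<in>set ys. fst fg \<in> Kc \<and> snd fg \<in> Kc}"
  have cl: "Dv h v \<in> M" if "h \<in> M" "v \<in> Dc" for h v
  proof -
    from that obtain ys where ys: "h = sp ys" "\<forall>fg\<in>set ys. fst fg \<in> Kc \<and> snd fg \<in> Kc"
      unfolding M_def by blast
    have "Dv h v = sp (dl ys v)" using ys by (simp add: sp_Dv smooth_diff Kc_smooth)
    moreover have "\<forall>fg\<in>set (dl ys v). fst fg \<in> Kc \<and> snd fg \<in> Kc"
      using dl_pred[OF ys(2)] Kc_Dv[OF _ that(2)] by blast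
    ultimately show ?thesis unfolding M_def by blast
  qed
  have sm: "smooth (sp xs)" using xs by (intro Msm_smooth sp_Msm) (auto simp: Kc_smooth)
  show ?thesis unfolding Kc_def
  proof (intro CollectI conjI allI impI sm)
    fix vs :: "'n phase_pt list" assume vs: "set vs \<subseteq> Dc"
    have "sp xs \<in> M" using xs unfolding M_def by blast
    then have "pderivs (sp xs) vs \<in> M" using closure_pderivs[OF _ cl vs] by blast
    then obtain ys where ys: "pderivs (sp xs) vs = sp ys" "\<forall>fg\<in>set ys. fst fg \<in> Kc \<and> snd fg \<in> Kc"
      unfolding M_def by blast
    show "\<exists>C N. \<forall>x \<xi>. norm (pderivs (sp xs) vs (x,\<xi>)) \<le> C * jbr \<xi> powr N"
      using sp_bound_K[OF ys(2)] unfolding ys(1) by blast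
  qed
qed

lemma sp_in_Sc:
  fixes xs :: "(('n::finite phase_pt \<Rightarrow> complex) \<times> ('n phase_pt \<Rightarrow> complex)) list"
  assumes xs: "\<forall>fg\<in>set xs. fst fg \<in> Kc \<and> snd fg \<in> Sc"
  shows "sp xs \<in> Sc"
proof -
  define M :: "('n phase_pt \<Rightarrow> complex) set" where "M = {sp ys | ys. \<forall>fg\<in>set ys. fst fg \<in> Kc \<and> snd fg \<in> Sc}"
  have cl: "Dv h v \<in> M" if "h \<in> M" "v \<in> Dc" for h v
  proof -
    from that obtain ys where ys: "h = sp ys" "\<forall>fg\<in>set ys. fst fg \<in> Kc \<and> snd fg \<in> Sc"
      unfolding M_def by blast
    have "Dv h v = sp (dl ys v)" using ys by (simp add: sp_Dv smooth_diff Kc_smooth Sc_smooth)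
    moreover have "\<forall>fg\<in>set (dl ys v). fst fg \<in> Kc \<and> snd fg \<in> Sc"
      using dl_pred[OF ys(2)] Kc_Dv[OF _ that(2)] Sc_Dv[OF _ that(2)] by blast
    ultimately show ?thesis unfolding M_def by blast
  qed
  have sm: "smooth (sp xs)" using xs by (intro Msm_smooth sp_Msm) (auto simp: Kc_smooth Sc_smooth)
  show ?thesis unfolding Sc_def
  proof (intro CollectI conjI allI impI sm)
    fix vs :: "'n phase_pt list"and m :: real assume vs: "set vs \<subseteq> Dc"
    have "sp xs \<in> M" using xs unfolding M_def by blast
    then have "pderivs (sp xs) vs \<in> M" using closure_pderivs[OF _ cl vs] by blast
    then obtain ys where ys: "pderivs (sp xs) vs = sp ys" "\<forall>fg\<in>set ys. fst fg \<in> Kc \<and> snd fg \<in> Sc"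
      unfolding M_def by blast
    show "\<exists>C. \<forall>x \<xi>. norm (pderivs (sp xs) vs (x,\<xi>)) \<le> C * jbr \<xi> powr m"
      using sp_bound_S[OF ys(2)] unfolding ys(1) by blast
  qed
qed



lemma pderivs_const: "pderivs (\<lambda>_. c) vs = (\<lambda>_. if vs = [] then c else 0)"
proof (induction vs)
  case Nil then show ?case by simp
next
  case (Cons v vs)
  have "frechet_derivative (\<lambda>_. if vs = [] then c else 0) (at p) = (\<lambda>_. 0)" for p
    by (rule frechet_derivative_at[symmetric]) (rule has_derivative_const)
  then show ?case using Cons by simp
qed

lemma const_Kc: "(\<lambda>_. c) \<in> Kc"
  unfolding Kc_def smooth_def
proof (intro CollectI conjI allI impI)
  fix vs :: "'a phase_pt list" and p
  show "pderivs (\<lambda>_. c) vs differentiable (at p)" by (simp add: pderivs_const)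
next
  fix vs :: "'a phase_pt list"
  have "norm (pderivs (\<lambda>_. c) vs (x,\<xi>)) \<le> norm c * jbr \<xi> powr 0" for x \<xi>
    using jbr_pos[of \<xi>] by (simp add: pderivs_const)
  then show "\<exists>C N. \<forall>x \<xi>. norm (pderivs (\<lambda>_. c) vs (x,\<xi>)) \<le> C * jbr \<xi> powr N" by blast
qed

lemma pderivs_scale:
  fixes g :: "'a::real_normed_vector \<Rightarrow> real"
  assumes "smooth g"
  fixes z :: complex
  shows "pderivs (\<lambda>p. z * of_real (g p)) vs = (\<lambda>p. z * of_real (pderivs g vs p))"
proof (induction vs)
  case Nil then show ?case by simp
next
  case (Cons v vs)
  have D: "((\<lambda>p. z * of_real (pderivs g vs p)) has_derivative
          (\<lambda>w. z * of_real (frechet_derivative (pderivs g vs) (at p) w))) (at p)" for p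
  proof -
    have "(pderivs g vs has_derivative frechet_derivative (pderivs g vs) (at p)) (at p)"
      using assms unfolding smooth_def by (simp add: frechet_derivative_works[symmetric])
    then show ?thesis by (intro has_derivative_mult_right has_derivative_of_real)
  qed
  have "frechet_derivative (\<lambda>p. z * of_real (pderivs g vs p)) (at p) v
      = z * of_real (frechet_derivative (pderivs g vs) (at p) v)" for p
    using fun_cong[OF frechet_derivative_at[OF D[of p]], of v] by simp
  then show ?case using Cons by simp
qed

lemma smooth_scale:
  fixes g :: "'a::real_normed_vector \<Rightarrow> real"
  assumes "smooth g"
  fixes z :: complex
  shows "smooth (\<lambda>p. z * of_real (g p))"
  unfolding smooth_def
proof (intro allI)
  fix vs p
  have "pderivs g vs differentiable (at p)" using assms unfolding smooth_def by blast
  then obtain D where "(pderivs g vs has_derivative D) (at p)" unfolding differentiable_def by blast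
  then have "((\<lambda>p. z * of_real (pderivs g vs p)) has_derivative (\<lambda>w. z * of_real (D w))) (at p)"
    by (intro has_derivative_mult_right has_derivative_of_real)
  then show "pderivs (\<lambda>p. z * of_real (g p)) vs differentiable (at p)"
    unfolding pderivs_scale[OF assms] differentiable_def by blast
qed

lemma symb_smooth: "g \<in> symb r \<Longrightarrow> smooth g" unfolding symb_def by simp

lemma symb_Kc:
  fixes g :: "('n::finite) phase_pt \<Rightarrow> real"
  assumes g: "g \<in> symb r"
  shows "(\<lambda>p. z * of_real (g p)) \<in> Kc"
  unfolding Kc_def
proof (intro CollectI conjI allI impI)
  show "smooth (\<lambda>p. z * of_real (g p))" using smooth_scale symb_smooth[OF g] by blast
next
  fix vs :: "'n phase_pt list" assume vs: "set vs \<subseteq> Dc"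
  then obtain C where C: "\<forall>x \<xi>. norm (pderivs g vs (x, \<xi>))
               \<le> C * jbr \<xi> powr (r - real (length (filter (\<lambda>v. v \<in> xidirs) vs)))"
    using g unfolding symb_def Dc_def by blast
  have "norm (pderivs (\<lambda>p. z * of_real (g p)) vs (x,\<xi>)) \<le> (norm z * \<bar>C\<bar>) * jbr \<xi> powr \<bar>r\<bar>" for x \<xi>
  proof -
    have "norm (pderivs g vs (x, \<xi>)) \<le> \<bar>C\<bar> * jbr \<xi> powr (r - real (length (filter (\<lambda>v. v \<in> xidirs) vs)))"
      using C normbound jbrp_pos by blast
    also have "\<dots> \<le> \<bar>C\<bar> * jbr \<xi> powr \<bar>r\<bar>"
      by (intro mult_left_mono powr_mono jbr_ge1) auto
    finally have "norm (pderivs g vs (x, \<xi>)) \<le> \<bar>C\<bar> * jbr \<xi> powr \<bar>r\<bar>" .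
    then have "norm z * norm (pderivs g vs (x, \<xi>)) \<le> norm z * (\<bar>C\<bar> * jbr \<xi> powr \<bar>r\<bar>)"
      by (intro mult_left_mono) auto
    then show ?thesis unfolding pderivs_scale[OF symb_smooth[OF g]]
      by (simp add: norm_mult mult.assoc)
  qed
  then show "\<exists>C N. \<forall>x \<xi>. norm (pderivs (\<lambda>p. z * of_real (g p)) vs (x,\<xi>)) \<le> C * jbr \<xi> powr N"
    by blast
qed

definition Ef :: "real \<Rightarrow> ('a::real_normed_vector \<Rightarrow> real) \<Rightarrow> 'a \<Rightarrow> complex" where
  "Ef c d = (\<lambda>p. cis (c * d p))"

lemma E_Dv:
  fixes d :: "'a::real_normed_vector \<Rightarrow> real"
  assumes d: "smooth d" and k: "\<And>q. k differentiable (at q)"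
  shows "Dv (\<lambda>p. Ef c d p * k p) v =
     (\<lambda>p. Ef c d p * sp [(\<lambda>q. (\<i> * of_real c) * of_real (pderivs d [v] q), k), (\<lambda>q. 1, Dv k v)] p)"
proof -
  have H: "((\<lambda>p. Ef c d p * k p) has_derivative
     (\<lambda>w. Ef c d p * sp [(\<lambda>q. (\<i> * of_real c) * of_real (pderivs d [w] q), k), (\<lambda>q. 1, Dv k w)] p)) (at p)" for p
  proof -
    have dd: "(d has_derivative frechet_derivative d (at p)) (at p)"
      using smooth_diff[OF d] by (simp add: frechet_derivative_works[symmetric])
    have dk: "(k has_derivative frechet_derivative k (at p)) (at p)"
      using k by (simp add: frechet_derivative_works[symmetric])
    have "((\<lambda>p. cis (c * d p) * k p) has_derivative
       (\<lambda>w. cis (c * d p) * frechet_derivative k (at p) w +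
            ((c * frechet_derivative d (at p) w) *\<^sub>R (\<i> * cis (c * d p))) * k p)) (at p)"
      by (intro has_derivative_mult has_derivative_cis has_derivative_mult_right dd dk)
    then show ?thesis unfolding Ef_def
      by (rule has_derivative_eq_rhs) (auto simp: Ef_def Dv_def fun_eq_iff scaleR_conv_of_real algebra_simps)
  qed
  have "frechet_derivative (\<lambda>p. Ef c d p * k p) (at p) v =
      Ef c d p * sp [(\<lambda>q. (\<i> * of_real c) * of_real (pderivs d [v] q), k), (\<lambda>q. 1, Dv k v)] p" for p
    using fun_cong[OF frechet_derivative_at[OF H[of p]], of v] by simp
  then show ?thesis by (simp only: Dv_def[of "\<lambda>p. Ef c d p * k p"] fun_eq_iff) simp
qed

lemma E_diff:
  fixes d :: "'a::real_normed_vector \<Rightarrow> real"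
  assumes d: "smooth d" and k: "\<And>q. k differentiable (at q)"
  shows "(\<lambda>p. Ef c d p * k p) differentiable (at q)"
proof -
  obtain D where dd: "(d has_derivative D) (at q)" using smooth_diff[OF d] unfolding differentiable_def by blast
  obtain K where dk: "(k has_derivative K) (at q)" using k unfolding differentiable_def by blast
  have "((\<lambda>p. cis (c * d p) * k p) has_derivative
       (\<lambda>w. cis (c * d q) * K w + ((c * D w) *\<^sub>R (\<i> * cis (c * d q))) * k q)) (at q)"
    by (intro has_derivative_mult has_derivative_cis has_derivative_mult_right dd dk)
  then show ?thesis unfolding Ef_def differentiable_def by blast
qed



lemma smooth_pderivs: "smooth f \<Longrightarrow> smooth (pderivs f us)"
  unfolding smooth_def by (simp add: pderivs_append)

lemma sp2_smooth: "smooth a \<Longrightarrow> smooth b \<Longrightarrow> smooth c \<Longrightarrow> smooth e \<Longrightarrow> smooth (sp [(a,b),(c,e)])"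
  by (intro Msm_smooth sp_Msm) simp

lemma sp2_Kc: "a \<in> Kc \<Longrightarrow> b \<in> Kc \<Longrightarrow> c \<in> Kc \<Longrightarrow> e \<in> Kc \<Longrightarrow> sp [(a,b),(c,e)] \<in> Kc"
  by (intro sp_in_Kc) simp

lemma E_Kc:
  fixes d :: "('n::finite) phase_pt \<Rightarrow> real"
  assumes d: "smooth d" and Dd: "\<And>v. v \<in> Dc \<Longrightarrow> \<exists>r. pderivs d [v] \<in> symb r"
  shows "Ef c d \<in> Kc"
proof -
  have E1: "Ef c d = (\<lambda>p. Ef c d p * (\<lambda>_. 1) p)" by simp
  define Ms :: "('n phase_pt \<Rightarrow> complex) set" where "Ms = {(\<lambda>p. Ef c d p * k p) | k. smooth k}"
  have cls: "Dv h v \<in> Ms" if "h \<in> Ms" for h v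
  proof -
    from that obtain k where k: "h = (\<lambda>p. Ef c d p * k p)" "smooth k" unfolding Ms_def by blast
    have "Dv h v = (\<lambda>p. Ef c d p * sp [(\<lambda>q. (\<i> * of_real c) * of_real (pderivs d [v] q), k), (\<lambda>q. 1, Dv k v)] p)"
      unfolding k(1) by (rule E_Dv[OF d smooth_diff[OF k(2)]])
    moreover have "smooth (sp [(\<lambda>q. (\<i> * of_real c) * of_real (pderivs d [v] q), k), (\<lambda>q. 1, Dv k v)])"
      by (rule sp2_smooth[OF smooth_scale[OF smooth_pderivs[OF d]] k(2) Kc_smooth[OF const_Kc] smooth_Dv[OF k(2)]])
    ultimately show ?thesis unfolding Ms_def by blast
  qed
  have sm: "smooth (Ef c d)" unfolding smooth_def
  proof (intro allI)
    fix vs p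
    have "(\<lambda>p. Ef c d p * (\<lambda>_. (1::complex)) p) \<in> Ms" unfolding Ms_def
      by (rule CollectI, rule exI[of _ "\<lambda>_. 1"]) (simp add: Kc_smooth[OF const_Kc])
    then have "Ef c d \<in> Ms" by simp
    then have "pderivs (Ef c d) vs \<in> Ms" by (rule closure_pderivs[OF _ cls subset_UNIV])
    then obtain k where k: "pderivs (Ef c d) vs = (\<lambda>p. Ef c d p * k p)" "smooth k"
      unfolding Ms_def by blast
    show "pderivs (Ef c d) vs differentiable (at p)"
      unfolding k(1) by (rule E_diff[OF d smooth_diff[OF k(2)]])
  qed
  define Mb :: "('n phase_pt \<Rightarrow> complex) set" where "Mb = {(\<lambda>p. Ef c d p * k p) | k. k \<in> Kc}"
  have clb: "Dv h v \<in> Mb" if hM: "h \<in> Mb" and vD: "v \<in> Dc" for h v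
  proof -
    from hM obtain k where k: "h = (\<lambda>p. Ef c d p * k p)" "k \<in> Kc" unfolding Mb_def by blast
    have "Dv h v = (\<lambda>p. Ef c d p * sp [(\<lambda>q. (\<i> * of_real c) * of_real (pderivs d [v] q), k), (\<lambda>q. 1, Dv k v)] p)"
      unfolding k(1) by (rule E_Dv[OF d smooth_diff[OF Kc_smooth[OF k(2)]]])
    moreover obtain r where "pderivs d [v] \<in> symb r" using Dd[OF vD] by blast
    then have "sp [(\<lambda>q. (\<i> * of_real c) * of_real (pderivs d [v] q), k), (\<lambda>q. 1, Dv k v)] \<in> Kc"
      by (rule sp2_Kc[OF symb_Kc k(2) const_Kc Kc_Dv[OF k(2) vD]])
    ultimately show ?thesis unfolding Mb_def by blast
  qed
  show ?thesis unfolding Kc_def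
  proof (intro CollectI conjI allI impI sm)
    fix vs :: "'n phase_pt list" assume vs: "set vs \<subseteq> Dc"
    have "(\<lambda>p. Ef c d p * (\<lambda>_. (1::complex)) p) \<in> Mb" unfolding Mb_def
      by (rule CollectI, rule exI[of _ "\<lambda>_. 1"]) (simp add: const_Kc)
    then have "Ef c d \<in> Mb" by simp
    then have "pderivs (Ef c d) vs \<in> Mb" by (rule closure_pderivs[OF _ clb vs])
    then obtain k where k: "pderivs (Ef c d) vs = (\<lambda>p. Ef c d p * k p)" "k \<in> Kc" unfolding Mb_def by blast
    obtain C N where "C \<ge> 0" "\<forall>x \<xi>. norm (k (x,\<xi>)) \<le> C * jbr \<xi> powr N"
      using Kc_bnd[OF k(2), of "[]"] by auto
    then have "\<forall>x \<xi>. norm (pderivs (Ef c d) vs (x,\<xi>)) \<le> C * jbr \<xi> powr N"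
      unfolding k(1) by (simp add: Ef_def norm_mult)
    then show "\<exists>C N. \<forall>x \<xi>. norm (pderivs (Ef c d) vs (x,\<xi>)) \<le> C * jbr \<xi> powr N" by blast
  qed
qed

lemma E_mult_Sc:
  fixes d :: "('n::finite) phase_pt \<Rightarrow> real"
  assumes d: "smooth d" and Dd: "\<And>v. v \<in> Dc \<Longrightarrow> \<exists>r. pderivs d [v] \<in> symb r"
    and a: "a \<in> Sc"
  shows "(\<lambda>p. Ef c d p * a p) \<in> Sc"
proof -
  have "sp [(Ef c d, a)] \<in> Sc" using E_Kc[OF d Dd] a by (intro sp_in_Sc) auto
  moreover have "sp [(Ef c d, a)] = (\<lambda>p. Ef c d p * a p)" by simp
  ultimately show ?thesis by simp
qed

lemma Sinf_eq:
  fixes a :: "('n::finite) phase_pt \<Rightarrow> complex"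
  shows "a \<in> symb_minus_inf \<longleftrightarrow> a \<in> Sc"
proof
  assume a: "a \<in> symb_minus_inf"
  then have am: "a \<in> symb m" for m unfolding symb_minus_inf_def by blast
  show "a \<in> Sc" unfolding Sc_def
  proof (intro CollectI conjI allI impI)
    show "smooth a" using am[of 0] unfolding symb_def by blast
  next
    fix vs :: "'n phase_pt list" and m :: real assume vs: "set vs \<subseteq> Dc"
    obtain C where C: "\<forall>x \<xi>. norm (pderivs a vs (x, \<xi>))
               \<le> C * jbr \<xi> powr (m - real (length (filter (\<lambda>v. v \<in> xidirs) vs)))"
      using am[of m] vs unfolding symb_def Dc_def by blast
    have "norm (pderivs a vs (x, \<xi>)) \<le> \<bar>C\<bar> * jbr \<xi> powr m" for x \<xi>
    proof -
      have "norm (pderivs a vs (x, \<xi>)) \<le> \<bar>C\<bar> * jbr \<xi> powr (m - real (length (filter (\<lambda>v. v \<in> xidirs) vs)))"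
        using C normbound jbrp_pos by blast
      also have "\<dots> \<le> \<bar>C\<bar> * jbr \<xi> powr m"
        by (intro mult_left_mono powr_mono jbr_ge1) auto
      finally show ?thesis .
    qed
    then show "\<exists>C. \<forall>x \<xi>. norm (pderivs a vs (x, \<xi>)) \<le> C * jbr \<xi> powr m" by blast
  qed
next
  assume a: "a \<in> Sc"
  have "a \<in> symb m" for m unfolding symb_def
  proof (intro CollectI conjI allI impI)
    show "smooth a" using a unfolding Sc_def by blast
  next
    fix vs :: "'n phase_pt list" assume vs: "set vs \<subseteq> xdirs \<union> xidirs"
    then show "\<exists>C. \<forall>x \<xi>. norm (pderivs a vs (x, \<xi>))
               \<le> C * jbr \<xi> powr (m - real (length (filter (\<lambda>v. v \<in> xidirs) vs)))"
      using a unfolding Sc_def Dc_def by blast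
  qed
  then show "a \<in> symb_minus_inf" unfolding symb_minus_inf_def by blast
qed



theorem lemma2p9:
  fixes U :: "(real^'n) \<times> (real^'n) \<Rightarrow> real"
    and A :: "real^'n \<Rightarrow> real^'n"
    and W :: "(real^'n \<Rightarrow> complex) \<Rightarrow> real^'n \<Rightarrow> complex"
  assumes "hyp_U U"
    and "magnetic_potential A"
  shows "(\<exists>a \<in> symb_minus_inf. \<forall>u. schwartz u \<longrightarrow> W u = OpPhiA U A a u)
     \<longleftrightarrow> (\<exists>b \<in> symb_minus_inf. \<forall>u. schwartz u \<longrightarrow> W u = OpA A b u)"
proof -
  obtain d where d: "d \<in> symb_plus" and U: "\<And>x \<eta>. U (x, \<eta>) = x \<bullet> \<eta> + d (x, \<eta>)"
    using assms(1) unfolding hyp_U_def by blast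
  have dsm: "smooth d" using d unfolding symb_plus_def by blast
  have Dd: "\<exists>r. pderivs d [v] \<in> symb r" if "v \<in> Dc" for v
  proof -
    from that obtain i where "v = (axis i 1, 0) \<or> v = (0, axis i 1)"
      unfolding Dc_def xdirs_def xidirs_def by blast
    then show ?thesis using d unfolding symb_plus_def by blast
  qed
  have ph1: "cis (U (x, \<eta>) - y \<bullet> \<eta>) = cis ((x - y) \<bullet> \<eta>) * Ef 1 d (x, \<eta>)" for x y \<eta>
    by (simp add: U Ef_def cis_mult inner_diff_left algebra_simps)
  have ph2: "cis ((x - y) \<bullet> \<eta>) = cis (U (x, \<eta>) - y \<bullet> \<eta>) * Ef (-1) d (x, \<eta>)" for x y \<eta>
    by (simp add: U Ef_def cis_mult inner_diff_left algebra_simps)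
  have eq1: "OpPhiA U A a u = OpA A (\<lambda>p. Ef 1 d p * a p) u" for a u
    unfolding OpPhiA_def OpA_def ph1 by (simp add: algebra_simps)
  have eq2: "OpA A b u = OpPhiA U A (\<lambda>p. Ef (-1) d p * b p) u" for b u
    unfolding OpPhiA_def OpA_def ph2 by (simp add: algebra_simps)
  show ?thesis
  proof
    assume "\<exists>a \<in> symb_minus_inf. \<forall>u. schwartz u \<longrightarrow> W u = OpPhiA U A a u"
    then obtain a where a: "a \<in> symb_minus_inf" "\<forall>u. schwartz u \<longrightarrow> W u = OpPhiA U A a u" by blast
    have m: "(\<lambda>p. Ef 1 d p * a p) \<in> symb_minus_inf"
      using E_mult_Sc[OF dsm Dd] a(1) Sinf_eq by blast
    show "\<exists>b \<in> symb_minus_inf. \<forall>u. schwartz u \<longrightarrow> W u = OpA A b u"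
      by (rule bexI[OF _ m]) (simp add: a(2) eq1)
  next
    assume "\<exists>b \<in> symb_minus_inf. \<forall>u. schwartz u \<longrightarrow> W u = OpA A b u"
    then obtain b where b: "b \<in> symb_minus_inf" "\<forall>u. schwartz u \<longrightarrow> W u = OpA A b u" by blast
    have m: "(\<lambda>p. Ef (-1) d p * b p) \<in> symb_minus_inf"
      using E_mult_Sc[OF dsm Dd] b(1) Sinf_eq by blast
    show "\<exists>a \<in> symb_minus_inf. \<forall>u. schwartz u \<longrightarrow> W u = OpPhiA U A a u"
      by (rule bexI[OF _ m]) (simp add: b(2) eq2)
  qed
qed


end
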